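(* For any integers $p,d\ge2$, any $p$-element poset $P$ and any positive integer $k$, $$sat([k]^d,P)\le\sum_{r=d}^{d+p-2}s_{k,d,r}.$$
   Context: $[k]^d$ is ordered coordinatewise. The rank of $x\in[k]^d$ is $\sum_i x_i$, and $s_{k,d,r}$ is the number of elements of $[k]^d$ of rank $r$. For posets $P,R$, $P$ is a weak subposet of $R$ if there is an injection $i:P\to R$ with $p\le_P p'\Rightarrow i(p)\le_R i(p')$. A subset $F\subseteq Q$ is weak $P$-saturated if $F$ is weak $P$-free (does not contain $P$ as a weak subposet) but for every $x\in Q\setminus F$, $F\cup\{x\}$ contains $P$ as a weak subposet. $sat(Q,P)$ is the minimum size of a weak $P$-saturated subset of $Q$. *)

theory Defs
  imports Main
begin

definition grid :: "nat \<Rightarrow> nat \<Rightarrow> (nat \<Rightarrow> nat) set" where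
  "grid k d = {x. (\<forall>i<d. x i \<in> {1..k}) \<and> (\<forall>i\<ge>d. x i = 0)}"

definition grid_le :: "(nat \<Rightarrow> nat) \<Rightarrow> (nat \<Rightarrow> nat) \<Rightarrow> bool" where
  "grid_le x y \<longleftrightarrow> (\<forall>i. x i \<le> y i)"

definition grid_rank :: "nat \<Rightarrow> (nat \<Rightarrow> nat) \<Rightarrow> nat" where
  "grid_rank d x = (\<Sum>i<d. x i)"

definition s_count :: "nat \<Rightarrow> nat \<Rightarrow> nat \<Rightarrow> nat" where
  "s_count k d r = card {x \<in> grid k d. grid_rank d x = r}"

definition is_poset :: "'a set \<Rightarrow> ('a \<Rightarrow> 'a \<Rightarrow> bool) \<Rightarrow> bool" where
  "is_poset A le \<longleftrightarrow> (\<forall>a\<in>A. le a a) \<and>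
     (\<forall>a\<in>A. \<forall>b\<in>A. le a b \<and> le b a \<longrightarrow> a = b) \<and>
     (\<forall>a\<in>A. \<forall>b\<in>A. \<forall>c\<in>A. le a b \<and> le b c \<longrightarrow> le a c)"

definition weak_subposet ::
  "'a set \<Rightarrow> ('a \<Rightarrow> 'a \<Rightarrow> bool) \<Rightarrow> 'b set \<Rightarrow> ('b \<Rightarrow> 'b \<Rightarrow> bool) \<Rightarrow> bool" where
  "weak_subposet P leP R leR \<longleftrightarrow>
     (\<exists>f. inj_on f P \<and> f ` P \<subseteq> R \<and>
          (\<forall>p\<in>P. \<forall>p'\<in>P. leP p p' \<longrightarrow> leR (f p) (f p')))"

definition weak_saturated ::
  "'b set \<Rightarrow> ('b \<Rightarrow> 'b \<Rightarrow> bool) \<Rightarrow> 'a set \<Rightarrow> ('a \<Rightarrow> 'a \<Rightarrow> bool) \<Rightarrow> 'b set \<Rightarrow> bool" where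
  "weak_saturated Q leQ P leP F \<longleftrightarrow> F \<subseteq> Q \<and> \<not> weak_subposet P leP F leQ \<and>
     (\<forall>x\<in>Q - F. weak_subposet P leP (insert x F) leQ)"

definition sat ::
  "'b set \<Rightarrow> ('b \<Rightarrow> 'b \<Rightarrow> bool) \<Rightarrow> 'a set \<Rightarrow> ('a \<Rightarrow> 'a \<Rightarrow> bool) \<Rightarrow> nat" where
  "sat Q leQ P leP = (LEAST n. \<exists>F. weak_saturated Q leQ P leP F \<and> card F = n)"

end

theory Submission
  imports Defs
begin

lemma ws_mono:
  assumes "weak_subposet P leP T R" "T \<subseteq> T'"
  shows "weak_subposet P leP T' R"
proof -
  obtain f where "inj_on f P" "f ` P \<subseteq> T" "\<forall>p\<in>P. \<forall>p'\<in>P. leP p p' \<longrightarrow> R (f p) (f p')"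
    using assms(1) unfolding weak_subposet_def by blast
  then show ?thesis using assms(2) unfolding weak_subposet_def by (intro exI[of _ f]) auto
qed

lemma greedy:
  fixes S :: "'b set" and h :: "'b \<Rightarrow> nat" and R :: "'b \<Rightarrow> 'b \<Rightarrow> bool"
  assumes "finite S" "P \<noteq> {}"
  shows "\<exists>F \<subseteq> S. \<not> weak_subposet P leP F R \<and>
     (\<forall>y\<in>S - F. weak_subposet P leP (insert y {w\<in>F. h w \<le> h y}) R)"
  using assms(1)
proof (induction S rule: finite_ranking_induct[where f = h])
  case empty
  have "\<not> weak_subposet P leP {} R" using assms(2) unfolding weak_subposet_def by blast
  then show ?case by blast
next
  case (insert x S)
  show ?case
  proof (cases "x \<in> S")
    case True
    then show ?thesis using insert.IH by (simp add: insert_absorb)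
  next
    case False
    from insert.IH obtain F' where F': "F' \<subseteq> S" "\<not> weak_subposet P leP F' R"
      "\<forall>y\<in>S - F'. weak_subposet P leP (insert y {w\<in>F'. h w \<le> h y}) R" by blast
    show ?thesis
    proof (cases "weak_subposet P leP (insert x F') R")
      case True
      have eq: "{w\<in>F'. h w \<le> h x} = F'" using F'(1) insert.hyps(2) by blast
      have "\<forall>y\<in>insert x S - F'. weak_subposet P leP (insert y {w\<in>F'. h w \<le> h y}) R"
      proof
        fix y assume y: "y \<in> insert x S - F'"
        show "weak_subposet P leP (insert y {w\<in>F'. h w \<le> h y}) R"
        proof (cases "y = x")
          case True then show ?thesis using eq \<open>weak_subposet P leP (insert x F') R\<close> by simp
        next
          case False then show ?thesis using F'(3) y by blast
        qed
      qed
      moreover have "F' \<subseteq> insert x S" using F'(1) by blast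
      ultimately show ?thesis using F'(2) by (intro exI[of _ F']) simp
    next
      case nt: False
      have "\<forall>y\<in>insert x S - insert x F'.
          weak_subposet P leP (insert y {w\<in>insert x F'. h w \<le> h y}) R"
      proof
        fix y assume y: "y \<in> insert x S - insert x F'"
        then have "weak_subposet P leP (insert y {w\<in>F'. h w \<le> h y}) R" using F'(3) by blast
        then show "weak_subposet P leP (insert y {w\<in>insert x F'. h w \<le> h y}) R"
          by (rule ws_mono) blast
      qed
      moreover have "insert x F' \<subseteq> insert x S" using F'(1) by blast
      ultimately show ?thesis using nt by (intro exI[of _ "insert x F'"]) simp
    qed
  qed
qed

lemma linext:
  assumes "finite P" "is_poset P leP"
  shows "\<exists>g. inj_on g P \<and> g ` P \<subseteq> {..<card P} \<and> (\<forall>a\<in>P. \<forall>b\<in>P. leP a b \<longrightarrow> g a \<le> g b)"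
proof -
  define dc where "dc a = card {b\<in>P. leP b a}" for a
  have prefl: "\<And>a. a \<in> P \<Longrightarrow> leP a a" using assms(2) unfolding is_poset_def by blast
  have pas: "\<And>a b. a \<in> P \<Longrightarrow> b \<in> P \<Longrightarrow> leP a b \<Longrightarrow> leP b a \<Longrightarrow> a = b"
    using assms(2) unfolding is_poset_def by blast
  have ptr: "\<And>a b c. a \<in> P \<Longrightarrow> b \<in> P \<Longrightarrow> c \<in> P \<Longrightarrow> leP a b \<Longrightarrow> leP b c \<Longrightarrow> leP a c"
    using assms(2) unfolding is_poset_def by blast
  have key: "S \<subseteq> P \<longrightarrow> (\<exists>g. inj_on g S \<and> g ` S \<subseteq> {..<card S} \<and> (\<forall>a\<in>S. \<forall>b\<in>S. leP a b \<longrightarrow> g a \<le> g b))"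
    if "finite S" for S
    using that
  proof (induction S rule: finite_ranking_induct[where f = dc])
    case empty
    then show ?case by auto
  next
    case (insert x S)
    show ?case
    proof (cases "x \<in> S")
      case True
      then show ?thesis using insert.IH by (simp add: insert_absorb)
    next
      case False
      show ?thesis
      proof
        assume sub: "insert x S \<subseteq> P"
        then obtain g where g: "inj_on g S" "g ` S \<subseteq> {..<card S}"
          "\<forall>a\<in>S. \<forall>b\<in>S. leP a b \<longrightarrow> g a \<le> g b" using insert.IH by blast
        define g' where "g' = g(x := card S)"
        have c: "card (insert x S) = Suc (card S)" using False insert.hyps(1) by simp
        have gS: "\<And>a. a \<in> S \<Longrightarrow> g' a = g a" using False unfolding g'_def by auto
        have gx: "g' x = card S" unfolding g'_def by simp
        have imS: "g' ` S = g ` S" using gS by (rule image_cong[OF refl])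
        have "inj_on g' S" using g(1) gS inj_on_cong by blast
        moreover have "g' x \<notin> g' ` (S - {x})" using imS gx g(2) False by auto
        ultimately have "inj_on g' (insert x S)" by (simp add: inj_on_insert)
        moreover have "g' ` insert x S \<subseteq> {..<card (insert x S)}" using g(2) c imS gx by auto
        moreover have "\<forall>a\<in>insert x S. \<forall>b\<in>insert x S. leP a b \<longrightarrow> g' a \<le> g' b"
        proof (intro ballI impI)
          fix a b assume a: "a \<in> insert x S" and b: "b \<in> insert x S" and ab: "leP a b"
          show "g' a \<le> g' b"
          proof (cases "a = x")
            case ax: True
            show ?thesis
            proof (cases "b = x")
              case True then show ?thesis using ax by simp
            next
              case bx: False
              then have bS: "b \<in> S" using b by blast
              have xP: "x \<in> P" and bP: "b \<in> P" using sub bS by auto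
              have "{c\<in>P. leP c x} \<subset> {c\<in>P. leP c b}"
              proof
                show "{c\<in>P. leP c x} \<subseteq> {c\<in>P. leP c b}"
                  using ptr ab ax xP bP by blast
                have "b \<in> {c\<in>P. leP c b}" using prefl bP by blast
                moreover have "b \<notin> {c\<in>P. leP c x}"
                  using pas ab ax xP bP bx by blast
                ultimately show "{c\<in>P. leP c x} \<noteq> {c\<in>P. leP c b}" by blast
              qed
              then have "dc x < dc b" unfolding dc_def using assms(1) by (simp add: psubset_card_mono)
              moreover have "dc b \<le> dc x" using insert.hyps(2) bS by blast
              ultimately show ?thesis by simp
            qed
          next
            case ax: False
            then have aS: "a \<in> S" using a by blast
            show ?thesis
            proof (cases "b = x")
              case True then show ?thesis using g(2) aS ax unfolding g'_def by auto
            next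
              case False
              then show ?thesis using g(3) aS b ab ax False unfolding g'_def by auto
            qed
          qed
        qed
        ultimately show "\<exists>g. inj_on g (insert x S) \<and> g ` insert x S \<subseteq> {..<card (insert x S)} \<and>
          (\<forall>a\<in>insert x S. \<forall>b\<in>insert x S. leP a b \<longrightarrow> g a \<le> g b)" by blast
      qed
    qed
  qed
  show ?thesis using key[OF assms(1)] by blast
qed


lemma rank_ge:
  assumes "x \<in> grid k d" shows "d \<le> grid_rank d x"
proof -
  have "(\<Sum>i<d. (1::nat)) \<le> (\<Sum>i<d. x i)"
    using assms unfolding grid_def by (intro sum_mono) auto
  then show ?thesis unfolding grid_rank_def by simp
qed

lemma grid_finite: "finite (grid k d)"
proof -
  let ?m = "\<lambda>xs i. if i < d then xs ! i else (0::nat)"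
  have "grid k d \<subseteq> ?m ` {xs. set xs \<subseteq> {0..k} \<and> length xs = d}"
  proof
    fix x assume x: "x \<in> grid k d"
    have "x = ?m (map x [0..<d])"
    proof
      fix i show "x i = ?m (map x [0..<d]) i" using x unfolding grid_def by auto
    qed
    moreover have "set (map x [0..<d]) \<subseteq> {0..k}" using x unfolding grid_def by auto
    ultimately show "x \<in> ?m ` {xs. set xs \<subseteq> {0..k} \<and> length xs = d}"
      by (intro image_eqI[of _ _ "map x [0..<d]"]) auto
  qed
  moreover have "finite (?m ` {xs. set xs \<subseteq> {0..k} \<and> length xs = d})"
    by (intro finite_imageI finite_lists_length_eq) simp
  ultimately show ?thesis by (rule finite_subset)
qed

lemma le_rank_eq:
  assumes y: "y \<in> grid k d" and w: "w \<in> grid k d" and le: "grid_le y w"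
    and r: "grid_rank d w \<le> grid_rank d y"
  shows "w = y"
proof (rule ccontr)
  assume ne: "w \<noteq> y"
  then obtain i where i: "w i \<noteq> y i" by blast
  have id: "i < d"
  proof (rule ccontr)
    assume "\<not> i < d" then show False using y w i unfolding grid_def by auto
  qed
  have "y i < w i" using le i unfolding grid_le_def by (metis le_neq_implies_less)
  then have "(\<Sum>j<d. y j) < (\<Sum>j<d. w j)"
    using le id unfolding grid_le_def by (intro sum_strict_mono_ex1) auto
  then show False using r unfolding grid_rank_def by simp
qed

definition pick :: "nat \<Rightarrow> (nat \<Rightarrow> nat) \<Rightarrow> (nat \<Rightarrow> nat)" where
  "pick d y = (let i = (SOME i. i < d \<and> 1 < y i) in y(i := y i - 1))"

lemma pick_props:
  assumes y: "y \<in> grid k d" and r: "d < grid_rank d y"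
  shows "pick d y \<in> grid k d \<and> grid_le (pick d y) y \<and> grid_rank d (pick d y) = grid_rank d y - 1"
proof -
  have "\<exists>i. i < d \<and> 1 < y i"
  proof (rule ccontr)
    assume "\<not> ?thesis"
    then have "\<forall>i<d. y i = 1" using y unfolding grid_def by fastforce
    then have "grid_rank d y = d" unfolding grid_rank_def by simp
    then show False using r by simp
  qed
  then have i: "(SOME i. i < d \<and> 1 < y i) < d \<and> 1 < y (SOME i. i < d \<and> 1 < y i)"
    by (rule someI_ex)
  define i where "i = (SOME i. i < d \<and> 1 < y i)"
  have id: "i < d" and yi: "1 < y i" using i unfolding i_def by auto
  have pd: "pick d y = y(i := y i - 1)" unfolding pick_def i_def Let_def by simp
  have g: "pick d y \<in> grid k d" using y id yi unfolding pd grid_def by auto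
  have l: "grid_le (pick d y) y" unfolding pd grid_le_def by simp
  have s1: "(\<Sum>j<d. y j) = y i + (\<Sum>j\<in>{..<d} - {i}. y j)"
    using id by (simp add: sum.remove)
  have s2: "(\<Sum>j<d. (y(i := y i - 1)) j) = (y i - 1) + (\<Sum>j\<in>{..<d} - {i}. (y(i := y i - 1)) j)"
    using id by (simp add: sum.remove)
  have s3: "(\<Sum>j\<in>{..<d} - {i}. (y(i := y i - 1)) j) = (\<Sum>j\<in>{..<d} - {i}. y j)"
    by (intro sum.cong) auto
  have "grid_rank d (pick d y) = grid_rank d y - 1"
    unfolding grid_rank_def pd using s1 s2 s3 yi by simp
  then show ?thesis using g l by simp
qed

lemma iter_props:
  assumes y: "y \<in> grid k d"
  shows "n + d \<le> grid_rank d y \<Longrightarrow> (pick d ^^ n) y \<in> grid k d \<and> grid_le ((pick d ^^ n) y) y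
     \<and> grid_rank d ((pick d ^^ n) y) = grid_rank d y - n"
proof (induction n)
  case 0
  then show ?case using y unfolding grid_le_def by simp
next
  case (Suc n)
  then have IH: "(pick d ^^ n) y \<in> grid k d" "grid_le ((pick d ^^ n) y) y"
     "grid_rank d ((pick d ^^ n) y) = grid_rank d y - n" by auto
  have "d < grid_rank d ((pick d ^^ n) y)" using IH(3) Suc.prems by simp
  from pick_props[OF IH(1) this] show ?case using IH Suc.prems unfolding grid_le_def
    by (auto intro: le_trans)
qed

lemma iter_mono:
  assumes y: "y \<in> grid k d" and nm: "n \<le> m" and m: "m + d \<le> grid_rank d y"
  shows "grid_le ((pick d ^^ m) y) ((pick d ^^ n) y)"
proof -
  have A: "(pick d ^^ n) y \<in> grid k d" "grid_rank d ((pick d ^^ n) y) = grid_rank d y - n"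
    using iter_props[OF y, of n] nm m by auto
  have eq: "(pick d ^^ m) y = (pick d ^^ (m - n)) ((pick d ^^ n) y)"
    using nm by (metis funpow_add le_add_diff_inverse2 comp_apply)
  have "(m - n) + d \<le> grid_rank d ((pick d ^^ n) y)" using A(2) nm m by simp
  then show ?thesis using iter_props[OF A(1), of "m - n"] eq by simp
qed

lemma chain_embed:
  fixes c :: "nat \<Rightarrow> (nat \<Rightarrow> nat)"
  assumes "finite P" "is_poset P leP" "card P = p"
    and mono: "\<And>i j. i \<le> j \<Longrightarrow> j < p \<Longrightarrow> grid_le (c i) (c j)"
    and inj: "inj_on c {..<p}" and sub: "c ` {..<p} \<subseteq> T"
  shows "weak_subposet P leP T grid_le"
proof -
  obtain g where g: "inj_on g P" "g ` P \<subseteq> {..<p}" "\<forall>a\<in>P. \<forall>b\<in>P. leP a b \<longrightarrow> g a \<le> g b"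
    using linext[OF assms(1,2)] assms(3) by blast
  have "inj_on (c \<circ> g) P" using g(1,2) inj by (metis comp_inj_on inj_on_subset)
  moreover have "(c \<circ> g) ` P \<subseteq> T" using g(2) sub by auto
  moreover have "\<forall>a\<in>P. \<forall>b\<in>P. leP a b \<longrightarrow> grid_le ((c \<circ> g) a) ((c \<circ> g) b)"
    using g(2,3) mono by auto
  ultimately show ?thesis unfolding weak_subposet_def by blast
qed


theorem proposition1p7:
  fixes P :: "'a set" and leP :: "'a \<Rightarrow> 'a \<Rightarrow> bool" and p d k :: nat
  assumes "p \<ge> 2" and "d \<ge> 2" and "k \<ge> 1"
    and "finite P" and "card P = p" and "is_poset P leP"
  shows "sat (grid k d) grid_le P leP \<le> (\<Sum>r = d..d + p - 2. s_count k d r)"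
proof -
  define L where "L = {x \<in> grid k d. grid_rank d x \<le> d + p - 2}"
  have Pne: "P \<noteq> {}" using assms(1,5) by auto
  have finL: "finite L" unfolding L_def using grid_finite by simp
  obtain F where F: "F \<subseteq> L" "\<not> weak_subposet P leP F grid_le"
    "\<forall>y\<in>L - F. weak_subposet P leP (insert y {w\<in>F. grid_rank d w \<le> grid_rank d y}) grid_le"
    using greedy[OF finL Pne, where leP = leP and h = "grid_rank d" and R = grid_le] by blast
  have Lg: "L \<subseteq> grid k d" unfolding L_def by blast
  have sat_ext: "weak_subposet P leP (insert x F) grid_le" if x: "x \<in> grid k d - F" for x
  proof (cases "x \<in> L")
    case True
    then have "weak_subposet P leP (insert x {w\<in>F. grid_rank d w \<le> grid_rank d x}) grid_le"
      using F(3) x by blast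
    then show ?thesis by (rule ws_mono) blast
  next
    case xL: False
    have xg: "x \<in> grid k d" using x by blast
    have rx: "d + p - 2 < grid_rank d x" using xL xg unfolding L_def by auto
    show ?thesis
    proof (cases "\<exists>y\<in>L - F. grid_le y x")
      case True
      then obtain y where y: "y \<in> L - F" "grid_le y x" by blast
      define G where "G = {w\<in>F. grid_rank d w \<le> grid_rank d y}"
      have ry: "grid_rank d y \<le> d + p - 2" using y(1) unfolding L_def by blast
      have yg: "y \<in> grid k d" using y(1) Lg by blast
      have "weak_subposet P leP (insert y G) grid_le" using F(3) y(1) unfolding G_def by blast
      then obtain f where f: "inj_on f P" "f ` P \<subseteq> insert y G"
        "\<forall>q\<in>P. \<forall>q'\<in>P. leP q q' \<longrightarrow> grid_le (f q) (f q')"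
        unfolding weak_subposet_def by blast
      define f' where "f' q = (if f q = y then x else f q)" for q
      have fG: "\<And>q. q \<in> P \<Longrightarrow> f q \<noteq> y \<Longrightarrow> f q \<in> G" using f(2) by blast
      have Gr: "\<And>w. w \<in> G \<Longrightarrow> grid_rank d w \<le> grid_rank d y" unfolding G_def by blast
      have GF: "G \<subseteq> F" unfolding G_def by blast
      have nx: "\<And>q. q \<in> P \<Longrightarrow> f q \<noteq> y \<Longrightarrow> f q \<noteq> x"
        using fG Gr ry rx by fastforce
      have "inj_on f' P"
      proof (rule inj_onI)
        fix q1 q2 assume q: "q1 \<in> P" "q2 \<in> P" "f' q1 = f' q2"
        then have "f q1 = f q2" unfolding f'_def using nx by (metis)
        then show "q1 = q2" using f(1) q inj_onD by metis
      qed
      moreover have "f' ` P \<subseteq> insert x F" unfolding f'_def using fG GF by auto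
      moreover have "\<forall>q\<in>P. \<forall>q'\<in>P. leP q q' \<longrightarrow> grid_le (f' q) (f' q')"
      proof (intro ballI impI)
        fix q q' assume q: "q \<in> P" "q' \<in> P" "leP q q'"
        have le: "grid_le (f q) (f q')" using f(3) q by blast
        show "grid_le (f' q) (f' q')"
        proof (cases "f q = y")
          case fy: True
          show ?thesis
          proof (cases "f q' = y")
            case True then show ?thesis using fy unfolding f'_def grid_le_def by simp
          next
            case False
            have "f q' \<in> G" using fG q False by blast
            then have "f q' \<in> grid k d" "grid_rank d (f q') \<le> grid_rank d y"
              using GF F(1) Lg Gr by auto
            then have "f q' = y" using le_rank_eq[OF yg _ _] le fy by metis
            then show ?thesis using False by blast
          qed
        next
          case fny: False
          show ?thesis
          proof (cases "f q' = y")
            case True then show ?thesis using fny le y(2) unfolding f'_def grid_le_def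
              by (auto intro: le_trans)
          next
            case False then show ?thesis using fny le unfolding f'_def by simp
          qed
        qed
      qed
      ultimately show ?thesis unfolding weak_subposet_def by blast
    next
      case False
      then have below: "\<And>y. y \<in> L \<Longrightarrow> grid_le y x \<Longrightarrow> y \<in> F" by blast
      define E where "E n = (pick d ^^ n) x" for n
      define c where "c j = (if j = p - 1 then x else E (grid_rank d x - d - j))" for j
      have cj: "c j \<in> grid k d \<and> grid_le (c j) x \<and> grid_rank d (c j) = d + j"
        if j: "j < p - 1" for j
      proof -
        have "(grid_rank d x - d - j) + d \<le> grid_rank d x" using rx j by simp
        from iter_props[OF xg this] show ?thesis using j rx unfolding c_def E_def by auto
      qed
      have "c ` {..<p} \<subseteq> insert x F"
      proof
        fix z assume "z \<in> c ` {..<p}"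
        then obtain j where j: "j < p" "z = c j" by blast
        show "z \<in> insert x F"
        proof (cases "j = p - 1")
          case True then show ?thesis using j unfolding c_def by simp
        next
          case False
          then have "j < p - 1" using j by simp
          from cj[OF this] have "c j \<in> L" "grid_le (c j) x" unfolding L_def using \<open>j < p - 1\<close> by auto
          then show ?thesis using below j by blast
        qed
      qed
      moreover have "grid_le (c i) (c j)" if ij: "i \<le> j" "j < p" for i j
      proof (cases "j = p - 1")
        case True
        then show ?thesis
        proof (cases "i = p - 1")
          case True then show ?thesis using \<open>j = p - 1\<close> unfolding grid_le_def by simp
        next
          case False
          have "c (p - 1) = x" unfolding c_def by simp
          then show ?thesis using cj[of i] ij True False by simp
        qed
      next
        case False
        then have "i \<noteq> p - 1" "j \<noteq> p - 1" using ij by auto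
        moreover have "grid_le (E (grid_rank d x - d - i)) (E (grid_rank d x - d - j))"
          unfolding E_def using ij rx by (intro iter_mono[OF xg]) auto
        ultimately show ?thesis unfolding c_def by presburger
      qed
      moreover have "inj_on c {..<p}"
      proof (rule inj_onI)
        fix i j assume ij: "i \<in> {..<p}" "j \<in> {..<p}" "c i = c j"
        have cx: "c (p - 1) = x" unfolding c_def by simp
        have rne: "grid_rank d (c l) \<noteq> grid_rank d x" if "l < p - 1" for l
          using cj[OF that] that rx by simp
        show "i = j"
        proof (cases "i = p - 1")
          case True
          show ?thesis
          proof (rule ccontr)
            assume "i \<noteq> j"
            then have "j < p - 1" using True ij(2) by auto
            then have "grid_rank d (c j) \<noteq> grid_rank d x" by (rule rne)
            moreover have "c j = x" using ij(3) True cx by metis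
            ultimately show False by blast
          qed
        next
          case False
          then have i1: "i < p - 1" using ij(1) by auto
          show ?thesis
          proof (cases "j = p - 1")
            case True
            have "c i = x" using ij(3) True cx by metis
            then show ?thesis using rne[OF i1] by blast
          next
            case False
            then have "j < p - 1" using ij(2) by auto
            then have "grid_rank d (c j) = d + j" using cj by blast
            moreover have "grid_rank d (c i) = d + i" using cj[OF i1] by blast
            moreover have "grid_rank d (c i) = grid_rank d (c j)" using ij(3) by metis
            ultimately show ?thesis by linarith
          qed
        qed
      qed
      ultimately show ?thesis using chain_embed[OF assms(4,6,5)] by blast
    qed
  qed
  have ws: "weak_saturated (grid k d) grid_le P leP F"
    unfolding weak_saturated_def using F(1,2) Lg sat_ext by blast
  have "sat (grid k d) grid_le P leP \<le> card F"
    unfolding sat_def using ws by (intro Least_le) blast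
  also have "card F \<le> card L" using F(1) finL by (rule card_mono[rotated])
  also have "L = (\<Union>r\<in>{d..d + p - 2}. {x \<in> grid k d. grid_rank d x = r})"
    unfolding L_def using rank_ge by fastforce
  also have "card \<dots> = (\<Sum>r = d..d + p - 2. card {x \<in> grid k d. grid_rank d x = r})"
    by (intro card_UN_disjoint) (auto simp: grid_finite)
  also have "\<dots> = (\<Sum>r = d..d + p - 2. s_count k d r)" unfolding s_count_def by simp
  finally show ?thesis .
qed

end
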